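(* Let $A=[a_{ij}]\in\{0,1\}^{N\times N}$ be the adjacency matrix of a static contact graph on nodes $\{1,\dots,N\}$ (with $a_{ii}=0$), let $\beta_0>0$, $\delta>0$, $\kappa>0$, $0\le\beta_a<\beta_0$, and set \[ \beta_{eq}=\beta_0\frac{\beta_a/\kappa}{1+\beta_a/\kappa}+\beta_a\frac{1}{1+\beta_a/\kappa}. \] If $(p_i^{ss},q_i^{ss})_{i=1}^N$ is a steady state of the SAIS system \[ \dot p_i=\beta_0(1-p_i-q_i)\sum_{j=1}^N a_{ij}p_j+\beta_a q_i\sum_{j=1}^N a_{ij}p_j-\delta p_i,\qquad \dot q_i=\kappa(1-p_i-q_i)\sum_{j=1}^N a_{ij}p_j-\beta_a q_i\sum_{j=1}^N a_{ij}p_j, \] then its infection probabilities satisfy the steady-state equations of the N-intertwined SIS model $\dot p_i=\beta(1-p_i)\sum_j a_{ij}p_j-\delta p_i$ with infection rate $\beta=\beta_{eq}$, namely \[ \beta_{eq}(1-p_i^{ss})\sum_{j=1}^N a_{ij}p_j^{ss}-\delta p_i^{ss}=0,\qquad\text{equivalently}\qquad \frac{\beta_{eq}}{\delta}\sum_{j=1}^N a_{ij}p_j^{ss}=\frac{p_i^{ss}}{1-p_i^{ss}}\ (p_i^{ss}\neq1), \] for all $i\in\{1,\dots,N\}$.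
   Context: $p_i$ and $q_i$ are the (mean-field) probabilities that individual $i$ is infected and alert; $a_{ij}=1$ iff individual $j$ is a neighbor of individual $i$. $\beta_0$: infection rate of susceptible individuals; $\beta_a$: infection rate of alert individuals; $\kappa$: alerting rate; $\delta$: curing rate. *)

theory Defs
  imports Complex_Main
begin

definition beta_eq :: "real \<Rightarrow> real \<Rightarrow> real \<Rightarrow> real" where
  "beta_eq \<beta>\<^sub>0 \<beta>\<^sub>a \<kappa> =
     \<beta>\<^sub>0 * ((\<beta>\<^sub>a / \<kappa>) / (1 + \<beta>\<^sub>a / \<kappa>)) + \<beta>\<^sub>a * (1 / (1 + \<beta>\<^sub>a / \<kappa>))"

end

theory Submission
  imports Defs
begin

theorem theorem4:
  fixes N :: nat and a :: "nat \<Rightarrow> nat \<Rightarrow> real"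
    and \<beta>\<^sub>0 \<beta>\<^sub>a \<delta> \<kappa> :: real and p q :: "nat \<Rightarrow> real"
  assumes adj: "\<forall>i\<in>{1..N}. \<forall>j\<in>{1..N}. a i j = 0 \<or> a i j = 1"
    and diag: "\<forall>i\<in>{1..N}. a i i = 0"
    and b0: "\<beta>\<^sub>0 > 0" and d: "\<delta> > 0" and k: "\<kappa> > 0"
    and ba: "0 \<le> \<beta>\<^sub>a" "\<beta>\<^sub>a < \<beta>\<^sub>0"
    and ss_p: "\<forall>i\<in>{1..N}. \<beta>\<^sub>0 * (1 - p i - q i) * (\<Sum>j=1..N. a i j * p j)
                 + \<beta>\<^sub>a * q i * (\<Sum>j=1..N. a i j * p j) - \<delta> * p i = 0"
    and ss_q: "\<forall>i\<in>{1..N}. \<kappa> * (1 - p i - q i) * (\<Sum>j=1..N. a i j * p j)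
                 - \<beta>\<^sub>a * q i * (\<Sum>j=1..N. a i j * p j) = 0"
  shows "\<forall>i\<in>{1..N}.
           beta_eq \<beta>\<^sub>0 \<beta>\<^sub>a \<kappa> * (1 - p i) * (\<Sum>j=1..N. a i j * p j) - \<delta> * p i = 0
         \<and> (p i \<noteq> 1 \<longrightarrow>
              beta_eq \<beta>\<^sub>0 \<beta>\<^sub>a \<kappa> / \<delta> * (\<Sum>j=1..N. a i j * p j) = p i / (1 - p i))"
proof
  fix i assume i: "i \<in> {1..N}"
  define S where "S = (\<Sum>j=1..N. a i j * p j)"
  define B where "B = beta_eq \<beta>\<^sub>0 \<beta>\<^sub>a \<kappa>"
  have P: "\<beta>\<^sub>0 * (1 - p i - q i) * S + \<beta>\<^sub>a * q i * S - \<delta> * p i = 0"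
    using ss_p i unfolding S_def by blast
  have Q: "\<kappa> * (1 - p i - q i) * S - \<beta>\<^sub>a * q i * S = 0"
    using ss_q i unfolding S_def by blast
  have kb: "\<kappa> + \<beta>\<^sub>a > 0" using k ba by linarith
  have beq: "B * (\<kappa> + \<beta>\<^sub>a) = \<beta>\<^sub>a * (\<beta>\<^sub>0 + \<kappa>)"
  proof -
    have h: "1 + \<beta>\<^sub>a / \<kappa> = (\<kappa> + \<beta>\<^sub>a) / \<kappa>" using k by (simp add: field_simps)
    have "B = (\<beta>\<^sub>0 * \<beta>\<^sub>a + \<beta>\<^sub>a * \<kappa>) / (\<kappa> + \<beta>\<^sub>a)"
    proof -
      have "(\<beta>\<^sub>a / \<kappa>) / ((\<kappa> + \<beta>\<^sub>a) / \<kappa>) = \<beta>\<^sub>a / (\<kappa> + \<beta>\<^sub>a)"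
        using k by simp
      moreover have "1 / ((\<kappa> + \<beta>\<^sub>a) / \<kappa>) = \<kappa> / (\<kappa> + \<beta>\<^sub>a)" by simp
      ultimately show ?thesis unfolding B_def beta_eq_def h
        by (simp add: add_divide_distrib)
    qed
    then show ?thesis using kb by (simp add: field_simps)
  qed
  have "(\<kappa> + \<beta>\<^sub>a) * (B * (1 - p i) * S - \<delta> * p i)
      = \<beta>\<^sub>a * (\<beta>\<^sub>0 + \<kappa>) * (1 - p i) * S - (\<kappa> + \<beta>\<^sub>a) * \<delta> * p i"
  proof -
    have "(\<kappa> + \<beta>\<^sub>a) * (B * (1 - p i) * S - \<delta> * p i)
        = (B * (\<kappa> + \<beta>\<^sub>a)) * (1 - p i) * S - (\<kappa> + \<beta>\<^sub>a) * \<delta> * p i"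
      by (simp only: algebra_simps)
    then show ?thesis unfolding beq .
  qed
  also have "\<dots> = 0"
  proof -
    have e1: "\<delta> * p i = \<beta>\<^sub>0 * (1 - p i - q i) * S + \<beta>\<^sub>a * q i * S" using P by linarith
    have e2: "\<kappa> * (1 - p i - q i) * S = \<beta>\<^sub>a * q i * S" using Q by linarith
    have "(\<kappa> + \<beta>\<^sub>a) * \<delta> * p i = (\<kappa> + \<beta>\<^sub>a) * (\<delta> * p i)" by simp
    also have "\<dots> = (\<kappa> + \<beta>\<^sub>a) * (\<beta>\<^sub>0 * (1 - p i - q i) * S + \<beta>\<^sub>a * q i * S)" using e1 by simp
    finally have e3: "(\<kappa> + \<beta>\<^sub>a) * \<delta> * p i = (\<kappa> + \<beta>\<^sub>a) * (\<beta>\<^sub>0 * (1 - p i - q i) * S + \<beta>\<^sub>a * q i * S)" .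
    have "\<beta>\<^sub>a * (\<beta>\<^sub>0 + \<kappa>) * (1 - p i) * S - (\<kappa> + \<beta>\<^sub>a) * (\<beta>\<^sub>0 * (1 - p i - q i) * S + \<beta>\<^sub>a * q i * S)
        = (\<beta>\<^sub>0 - \<beta>\<^sub>a) * (\<beta>\<^sub>a * q i * S - \<kappa> * (1 - p i - q i) * S)" by (simp add: algebra_simps)
    moreover have "(\<beta>\<^sub>0 - \<beta>\<^sub>a) * (\<beta>\<^sub>a * q i * S - \<kappa> * (1 - p i - q i) * S) = 0"
      using e2 by (simp only: diff_self mult_zero_right)
    ultimately show ?thesis unfolding e3 by linarith
  qed
  finally have A: "B * (1 - p i) * S - \<delta> * p i = 0" using kb by simp
  show "B * (1 - p i) * S - \<delta> * p i = 0 \<and> (p i \<noteq> 1 \<longrightarrow> B / \<delta> * S = p i / (1 - p i))"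
  proof (intro conjI impI A)
    assume "p i \<noteq> 1"
    then have "1 - p i \<noteq> 0" by simp
    have h: "B * S * (1 - p i) = \<delta> * p i"
    proof -
      have "B * S * (1 - p i) = B * (1 - p i) * S" by (simp only: mult_ac)
      then show ?thesis using A by linarith
    qed
    have "B / \<delta> * S = (B * S) / \<delta>" by simp
    also have "\<dots> = p i / (1 - p i)" using h d \<open>1 - p i \<noteq> 0\<close>
      by (simp add: frac_eq_eq mult.commute)
    finally show "B / \<delta> * S = p i / (1 - p i)" .
  qed
qed

end
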